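(* Let $\sigma$ be a strongly erasing $k$-block substitution with $w_\epsilon\ne1^k$ that satisfies the optimality condition. Then $f_\sigma$ has $1/2$-sensitive dependence on initial conditions: for every $x\in\mathbb I$ and every $\delta>0$ there exist $z\in\mathbb I$ with $|x-z|<\delta$ and $n\in\mathbb N$ such that $|f_\sigma^n(x)-f_\sigma^n(z)|\ge 1/2$.
   Context: Notation: $\mathbb I=[0,1]$. $\{0,1\}^*$ and $\{0,1\}^\omega$ denote finite and infinite binary words, and $\epsilon$ is the empty word. For a word $w$, set $0.w=\sum_iw_i2^{-i}$. For $x\in(0,1]$, $\widetilde x$ is the unique infinite binary expansion of $x$ not ending in $0^\infty$. Fix $k\ge2$. An erasing $k$-block substitution is a map $\sigma:\{0,1\}^k\to\{0,1\}^*$ with exactly one block $w_\epsilon$ such that $\sigma(w_\epsilon)=\epsilon$. It acts blockwise on infinite words and on finite words of length a multiple of $k$. $k$-rounding: a $k$-rounding of $w$ is any word $wv$ whose length is the least multiple of $k$ that is $\ge|w|$; if $|w|$ is a multiple of $k$, the only $k$-rounding of $w$ is $w$. $\sigma$ is strongly erasing if for every $w\in\{0,1\}^*$ there exist $n\in\mathbb N$ and words $r_0,\dots,r_{n-1}$ such that $r_0$ is a $k$-rounding of $w$, $r_j$ is a $k$-rounding of $\sigma(r_{j-1})$ for $1\le j\le n-1$, and $\sigma(r_{n-1})=\epsilon$. The map $f_\sigma:\mathbb I\to\mathbb I$ is defined by $f_\sigma(x)=0.\sigma(\widetilde x)$ if $x\in(0,1]$ and $\widetilde x\neq w_\epsilon^\infty$,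 and $f_\sigma(x)=0$ otherwise. Optimality condition: every $w\in\{0,1\}^\omega$ can be written as $w=\prod_{i\ge1}\sigma(b_i)$ with blocks $b_i\in\{0,1\}^k$ satisfying $\sigma(b_i)\ne\epsilon$. *)

theory Defs
  imports Complex_Main
begin

text \<open>Binary words: finite words are bool lists (True = 1, False = 0),
infinite words are functions nat \<Rightarrow> bool (position 0 is the first letter).\<close>

definition bval :: "bool list \<Rightarrow> real" where
  "bval w = (\<Sum>i<length w. (if w ! i then 1 else 0) / 2 ^ (i + 1))"

definition ival :: "(nat \<Rightarrow> bool) \<Rightarrow> real" where
  "ival w = (\<Sum>i. (if w i then 1 else 0) / 2 ^ (i + 1))"

definition tilde :: "real \<Rightarrow> (nat \<Rightarrow> bool)" where
  "tilde x = (THE w. (\<forall>n. \<exists>m\<ge>n. w m) \<and> ival w = x)"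

definition chunks :: "nat \<Rightarrow> bool list \<Rightarrow> bool list list" where
  "chunks k r = map (\<lambda>i. take k (drop (i * k) r)) [0..<length r div k]"

definition iblock :: "nat \<Rightarrow> (nat \<Rightarrow> bool) \<Rightarrow> nat \<Rightarrow> bool list" where
  "iblock k w i = map w [i * k..<(i + 1) * k]"

definition subst_fin :: "(bool list \<Rightarrow> bool list) \<Rightarrow> nat \<Rightarrow> bool list \<Rightarrow> bool list" where
  "subst_fin \<sigma> k r = concat (map \<sigma> (chunks k r))"

text \<open>Prefix of \<sigma>(w) produced by the first n blocks of an infinite word w,
and the value 0.\<sigma>(w) as the limit of the values of these prefixes
(works whether \<sigma>(w) is finite or infinite).\<close>
definition subst_pre :: "(bool list \<Rightarrow> bool list) \<Rightarrow> nat \<Rightarrow> (nat \<Rightarrow> bool) \<Rightarrow> nat \<Rightarrow> bool list" where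
  "subst_pre \<sigma> k w n = concat (map (\<lambda>i. \<sigma> (iblock k w i)) [0..<n])"

definition subst_val :: "(bool list \<Rightarrow> bool list) \<Rightarrow> nat \<Rightarrow> (nat \<Rightarrow> bool) \<Rightarrow> real" where
  "subst_val \<sigma> k w = lim (\<lambda>n. bval (subst_pre \<sigma> k w n))"

definition erasing_subst :: "(bool list \<Rightarrow> bool list) \<Rightarrow> nat \<Rightarrow> bool" where
  "erasing_subst \<sigma> k \<longleftrightarrow> (\<exists>!b. length b = k \<and> \<sigma> b = [])"

definition w_eps :: "(bool list \<Rightarrow> bool list) \<Rightarrow> nat \<Rightarrow> bool list" where
  "w_eps \<sigma> k = (THE b. length b = k \<and> \<sigma> b = [])"

definition k_rounding :: "nat \<Rightarrow> bool list \<Rightarrow> bool list \<Rightarrow> bool" where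
  "k_rounding k w r \<longleftrightarrow> (\<exists>v. r = w @ v) \<and>
     length r = (LEAST m. k dvd m \<and> length w \<le> m)"

definition strongly_erasing :: "(bool list \<Rightarrow> bool list) \<Rightarrow> nat \<Rightarrow> bool" where
  "strongly_erasing \<sigma> k \<longleftrightarrow>
     (\<forall>w. \<exists>n \<ge> 1. \<exists>r :: nat \<Rightarrow> bool list.
        k_rounding k w (r 0) \<and>
        (\<forall>j. 1 \<le> j \<and> j \<le> n - 1 \<longrightarrow> k_rounding k (subst_fin \<sigma> k (r (j - 1))) (r j)) \<and>
        subst_fin \<sigma> k (r (n - 1)) = [])"

definition optimal_subst :: "(bool list \<Rightarrow> bool list) \<Rightarrow> nat \<Rightarrow> bool" where
  "optimal_subst \<sigma> k \<longleftrightarrow>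
     (\<forall>w :: nat \<Rightarrow> bool. \<exists>b :: nat \<Rightarrow> bool list.
        (\<forall>i. length (b i) = k \<and> \<sigma> (b i) \<noteq> []) \<and>
        (\<forall>n. let p = concat (map (\<lambda>i. \<sigma> (b i)) [0..<n]) in
               p = map w [0..<length p]))"

definition f_sigma :: "(bool list \<Rightarrow> bool list) \<Rightarrow> nat \<Rightarrow> real \<Rightarrow> real" where
  "f_sigma \<sigma> k x =
     (if 0 < x \<and> x \<le> 1 \<and> tilde x \<noteq> (\<lambda>i. w_eps \<sigma> k ! (i mod k))
      then subst_val \<sigma> k (tilde x) else 0)"

end

theory Submission
  imports Defs
begin

definition pref :: "bool list \<Rightarrow> (nat \<Rightarrow> bool) \<Rightarrow> bool" where
  "pref p u \<longleftrightarrow> p = map u [0..<length p]"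

abbreviation trm :: "(nat \<Rightarrow> bool) \<Rightarrow> nat \<Rightarrow> real" where
  "trm u i \<equiv> (if u i then 1 else 0) / 2 ^ (i + 1)"

lemma trm_le: "\<bar>trm u i\<bar> \<le> (1/2) ^ Suc i"
  by (simp add: power_one_over)

lemma summable_trm: "summable (trm u)"
proof -
  have "summable (\<lambda>i. (1/2::real) ^ Suc i)" using power_half_series sums_summable by blast
  then show ?thesis
    by (rule summable_comparison_test'[where N=0]) (use trm_le in \<open>auto simp: abs_if\<close>)
qed

lemma ival_split: "ival u = (\<Sum>i<l. trm u i) + ival (\<lambda>i. u (i + l)) / 2 ^ l"
proof -
  have "ival u = (\<Sum>n. trm u (n + l)) + (\<Sum>i<l. trm u i)"
    unfolding ival_def by (rule suminf_split_initial_segment[OF summable_trm])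
  moreover have "(\<Sum>n. trm u (n + l)) = (\<Sum>n. trm (\<lambda>i. u (i + l)) n / 2 ^ l)"
    by (rule arg_cong[where f=suminf]) (auto simp: power_add)
  moreover have "\<dots> = ival (\<lambda>i. u (i + l)) / 2 ^ l"
    unfolding ival_def by (rule suminf_divide[OF summable_trm])
  ultimately show ?thesis by simp
qed

lemma ival_nonneg: "0 \<le> ival u"
  unfolding ival_def by (rule suminf_nonneg[OF summable_trm]) auto

lemma ival_le1: "ival u \<le> 1"
proof -
  have "ival u \<le> (\<Sum>i. (1/2::real) ^ Suc i)"
    unfolding ival_def
    by (rule suminf_le) (use power_half_series sums_summable summable_trm in \<open>auto simp: power_one_over\<close>)
  also have "\<dots> = 1" using power_half_series sums_unique by metis
  finally show ?thesis .
qed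

lemma ival_pos: "u j \<Longrightarrow> 0 < ival u"
  unfolding ival_def by (rule suminf_pos2[OF summable_trm, where i=j]) auto

lemma ival_ones: "ival (\<lambda>_. True) = 1"
  unfolding ival_def using power_half_series by (simp add: power_one_over sums_iff)

lemma ival_zeros: "ival (\<lambda>_. False) = 0"
  unfolding ival_def by simp

lemma bval_map: "bval (map u [0..<l]) = (\<Sum>i<l. trm u i)"
  unfolding bval_def by simp

lemma pref_ival:
  assumes "pref p u"
  shows "bval p \<le> ival u \<and> ival u \<le> bval p + 1 / 2 ^ length p"
proof -
  have b: "bval p = (\<Sum>i<length p. trm u i)" using assms bval_map unfolding pref_def by metis
  have "ival u = bval p + ival (\<lambda>i. u (i + length p)) / 2 ^ length p"
    using ival_split b by simp
  then show ?thesis using ival_nonneg[of "\<lambda>i. u (i + length p)"] ival_le1[of "\<lambda>i. u (i + length p)"]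
    by (simp add: divide_right_mono)
qed

lemma ival_first: "ival u = (if u 0 then 1 else 0) / 2 + ival (\<lambda>i. u (Suc i)) / 2"
  using ival_split[of u 1] by simp

lemma ival_lt:
  assumes "u 0" "\<not> v 0" "\<forall>n. \<exists>m\<ge>n. u m" "\<forall>n. \<exists>m\<ge>n. v m"
  shows "ival v < ival u"
proof -
  obtain m where m: "m \<ge> 1" "v m" using assms(4) by blast
  have "0 < ival (\<lambda>i. v (Suc i))" using m by (intro ival_pos[where j="m - 1"]) simp
  have "ival (\<lambda>i. v (Suc i)) \<le> 1" by (rule ival_le1)
  obtain m' where m': "m' \<ge> 1" "u m'" using assms(3) by blast
  have p: "0 < ival (\<lambda>i. u (Suc i))" using m' by (intro ival_pos[where j="m' - 1"]) simp
  show ?thesis using ival_first[of u] ival_first[of v] assms(1,2) p ival_le1[of "\<lambda>i. v (Suc i)"]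
    by simp
qed

lemma ival_inj:
  assumes "\<forall>n. \<exists>m\<ge>n. u m" "\<forall>n. \<exists>m\<ge>n. v m" "ival u = ival v"
  shows "u = v"
proof (rule ccontr)
  assume "u \<noteq> v"
  then have ex: "\<exists>i. u i \<noteq> v i" by auto
  define i where "i = (LEAST i. u i \<noteq> v i)"
  have di: "u i \<noteq> v i" unfolding i_def using LeastI_ex[OF ex] .
  have eq: "\<And>j. j < i \<Longrightarrow> u j = v j" unfolding i_def using not_less_Least by blast
  have s: "(\<Sum>j<i. trm u j) = (\<Sum>j<i. trm v j)" using eq by (intro sum.cong) auto
  let ?su = "\<lambda>j. u (j + i)" and ?sv = "\<lambda>j. v (j + i)"
  have su: "\<forall>n. \<exists>m\<ge>n. ?su m"
  proof
    fix n
    obtain m where "m \<ge> n + i" "u m" using assms(1) by blast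
    then show "\<exists>m\<ge>n. ?su m" by (intro exI[of _ "m - i"]) auto
  qed
  have sv: "\<forall>n. \<exists>m\<ge>n. ?sv m"
  proof
    fix n
    obtain m where "m \<ge> n + i" "v m" using assms(2) by blast
    then show "\<exists>m\<ge>n. ?sv m" by (intro exI[of _ "m - i"]) auto
  qed
  have "ival ?su \<noteq> ival ?sv"
  proof (cases "u i")
    case True
    then have "ival ?sv < ival ?su" using di su sv by (intro ival_lt) auto
    then show ?thesis by simp
  next
    case False
    then have "ival ?su < ival ?sv" using di su sv by (intro ival_lt) auto
    then show ?thesis by simp
  qed
  moreover have "ival ?su = ival ?sv"
    using ival_split[of u i] ival_split[of v i] s assms(3) by simp
  ultimately show False by simp
qed

lemma tilde_ival: "\<forall>n. \<exists>m\<ge>n. u m \<Longrightarrow> tilde (ival u) = u"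
  unfolding tilde_def by (rule the_equality) (auto intro: ival_inj)


lemma w_eps_props:
  assumes "erasing_subst \<sigma> k"
  shows "length (w_eps \<sigma> k) = k \<and> \<sigma> (w_eps \<sigma> k) = []"
proof -
  have "\<exists>!b. length b = k \<and> \<sigma> b = []" using assms unfolding erasing_subst_def .
  then show ?thesis unfolding w_eps_def by (rule theI')
qed

lemma pref_append: "pref (p @ q) u \<Longrightarrow> pref p u"
proof -
  assume "pref (p @ q) u"
  then have "p @ q = map u [0..<length p] @ map u [length p..<length p + length q]"
    unfolding pref_def using upt_add_eq_append[of 0 "length p" "length q"] by simp
  then show ?thesis unfolding pref_def by (simp add: append_eq_append_conv)
qed

lemma pref_shift:
  assumes "pref p u" "pref q (\<lambda>i. u (i + length p))"
  shows "pref (p @ q) u"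
proof -
  have "map u [0..<length p + length q] = map u [0..<length p] @ map u [length p..<length p + length q]"
    using upt_add_eq_append[of 0 "length p" "length q"] by simp
  also have "map u [length p..<length p + length q] = map (\<lambda>i. u (i + length p)) [0..<length q]"
    using map_add_upt[of "length p" "length q", symmetric] by (simp add: add.commute)
  finally show ?thesis using assms unfolding pref_def by simp
qed

lemma subst_pre_add: "subst_pre \<sigma> k u (N + e) = subst_pre \<sigma> k u N @ concat (map (\<lambda>i. \<sigma> (iblock k u i)) [N..<N+e])"
  unfolding subst_pre_def using upt_add_eq_append[of 0 N e] by simp

lemma pref_empty: "pref [] t" unfolding pref_def by simp


lemma step:
  assumes k: "k \<ge> 1" and er: "erasing_subst \<sigma> k" and opt: "optimal_subst \<sigma> k"
    and dv: "k dvd length r" and pt: "pref (subst_fin \<sigma> k r) t"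
  shows "\<exists>u. pref r u \<and> f_sigma \<sigma> k (ival u) = ival t"
proof -
  define s where "s = subst_fin \<sigma> k r"
  define m where "m = length r div k"
  have lr: "length r = m * k" using dv unfolding m_def by simp
  obtain b where b: "\<forall>i. length (b i) = k \<and> \<sigma> (b i) \<noteq> []"
    and bp: "\<forall>n. pref (concat (map (\<lambda>i. \<sigma> (b i)) [0..<n])) (\<lambda>i. t (i + length s))"
    using opt unfolding optimal_subst_def pref_def Let_def by blast
  define we where "we = w_eps \<sigma> k"
  have we: "length we = k" "\<sigma> we = []" using w_eps_props[OF er] unfolding we_def by auto
  define c where "c i = (if even i then b (i div 2) else we)" for i
  define u where "u i = (if i < length r then r ! i else c ((i - length r) div k) ! ((i - length r) mod k))" for i
  have lc: "length (c i) = k" for i using b we unfolding c_def by auto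
  have ib: "iblock k u i = (if i < m then take k (drop (i*k) r) else c (i - m))" for i
  proof (cases "i < m")
    case True
    have "(i+1)*k \<le> m * k" using True by (intro mult_right_mono) auto
    then have le: "i*k + k \<le> length r" using lr by simp
    show ?thesis
    proof (rule nth_equalityI)
      show "length (iblock k u i) = length (if i < m then take k (drop (i * k) r) else c (i - m))"
        using True le unfolding iblock_def by auto
      fix j assume "j < length (iblock k u i)"
      then have j: "j < k" unfolding iblock_def by simp
      then show "iblock k u i ! j = (if i < m then take k (drop (i * k) r) else c (i - m)) ! j"
        using True le unfolding iblock_def u_def by (auto simp: nth_append add.commute)
    qed
  next
    case False
    show ?thesis
    proof (rule nth_equalityI)
      show "length (iblock k u i) = length (if i < m then take k (drop (i * k) r) else c (i - m))"
        using False lc unfolding iblock_def by auto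
      fix j assume "j < length (iblock k u i)"
      then have j: "j < k" unfolding iblock_def by simp
      have mi: "m * k \<le> i * k" using False by simp
      have e: "i * k + j - m * k = (i - m) * k + j" using mi by (simp add: diff_mult_distrib)
      have nl: "\<not> i * k + j < m * k" using mi by linarith
      have "u (i * k + j) = c (i - m) ! j"
        using False j nl unfolding u_def lr e by auto
      then show "iblock k u i ! j = (if i < m then take k (drop (i * k) r) else c (i - m)) ! j"
        using False j unfolding iblock_def by (simp add: add.commute)
    qed
  qed
  have upos: "u (i*k+p) = iblock k u i ! p" if "p < k" for i p
    using that unfolding iblock_def by (simp add: add.commute)
  have sp: "subst_pre \<sigma> k u (m + d) = s @ concat (map (\<lambda>i. \<sigma> (c i)) [0..<d])" for d
  proof -
    have "subst_pre \<sigma> k u (m + d) = subst_pre \<sigma> k u m @ concat (map (\<lambda>i. \<sigma> (iblock k u i)) [m..<m+d])"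
      using subst_pre_add[of \<sigma> k u 0 m] subst_pre_add[of \<sigma> k u m d] by simp
    moreover have "subst_pre \<sigma> k u m = s"
      unfolding subst_pre_def s_def subst_fin_def chunks_def m_def[symmetric] using ib
      by (auto intro!: arg_cong[where f=concat] map_cong)
    moreover have "map (\<lambda>i. \<sigma> (iblock k u i)) [m..<m+d] = map (\<lambda>i. \<sigma> (c i)) [0..<d]"
      using map_add_upt[of m d, symmetric] ib by (simp add: add.commute)
    ultimately show ?thesis by simp
  qed
  have cc: "concat (map (\<lambda>i. \<sigma> (c i)) [0..<d]) = concat (map (\<lambda>i. \<sigma> (b i)) [0..<(d+1) div 2])" for d
  proof (induction d)
    case 0
    then show ?case by simp
  next
    case (Suc d)
    show ?case
    proof (cases "even d")
      case True
      then have "(Suc d + 1) div 2 = Suc ((d + 1) div 2)" "(d+1) div 2 = d div 2" by presburger+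
      then show ?thesis using Suc True unfolding c_def by simp
    next
      case False
      then have "(Suc d + 1) div 2 = (d + 1) div 2" by presburger
      then show ?thesis using Suc False we unfolding c_def by simp
    qed
  qed
  have pre: "pref (subst_pre \<sigma> k u N) t" for N
  proof (cases "N \<ge> m")
    case True
    then obtain d where "N = m + d" using le_Suc_ex by blast
    then show ?thesis using sp cc pref_shift[OF pt[folded s_def] bp[rule_format]] by simp
  next
    case False
    then obtain e where "m = N + e" using le_Suc_ex[of N m] by auto
    then have "pref (subst_pre \<sigma> k u N @ concat (map (\<lambda>i. \<sigma> (iblock k u i)) [N..<N+e])) t"
      using subst_pre_add[of \<sigma> k u N e] sp[of 0] pt[folded s_def] by simp
    then show ?thesis by (rule pref_append)
  qed
  have lenc: "d \<le> length (concat (map (\<lambda>i. \<sigma> (b i)) [0..<d]))" for d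
  proof (induction d)
    case 0 then show ?case by simp
  next
    case (Suc d)
    have "\<sigma> (b d) \<noteq> []" using b by blast
    then have "length (\<sigma> (b d)) \<ge> 1" by (cases "\<sigma> (b d)") auto
    then show ?case using Suc by simp
  qed
  have len: "d \<le> length (subst_pre \<sigma> k u (m + 2*d))" for d
  proof -
    have "(2*d+1) div 2 = d" by presburger
    then show ?thesis using sp[of "2*d"] cc[of "2*d"] lenc[of d] by simp
  qed
  have conv: "(\<lambda>N. bval (subst_pre \<sigma> k u N)) \<longlonglongrightarrow> ival t"
  proof (rule LIMSEQ_I)
    fix e :: real assume e: "0 < e"
    obtain d where d: "(1/2::real)^d < e" using real_arch_pow_inv[OF e, of "1/2"] by auto
    show "\<exists>no. \<forall>n\<ge>no. norm (bval (subst_pre \<sigma> k u n) - ival t) < e"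
    proof (intro exI allI impI)
      fix n assume n: "m + 2*d \<le> n"
      then obtain q where q: "n = m + 2*d + q" using le_Suc_ex by blast
      have "length (subst_pre \<sigma> k u n) \<ge> d"
        using len[of d] subst_pre_add[of \<sigma> k u "m+2*d" q] q by simp
      then have "(1/2::real) ^ length (subst_pre \<sigma> k u n) \<le> (1/2)^d"
        by (intro power_decreasing) auto
      moreover have "\<bar>bval (subst_pre \<sigma> k u n) - ival t\<bar> \<le> 1 / 2 ^ length (subst_pre \<sigma> k u n)"
        using pref_ival[OF pre[of n]] by auto
      ultimately show "norm (bval (subst_pre \<sigma> k u n) - ival t) < e"
        using d by (simp add: power_one_over)
    qed
  qed
  have sv: "subst_val \<sigma> k u = ival t"
    unfolding subst_val_def using conv by (rule limI)
  have ones: "\<forall>n. \<exists>j\<ge>n. u j"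
  proof
    fix n
    show "\<exists>j\<ge>n. u j"
    proof (cases "\<exists>p<k. we ! p")
      case True
      then obtain p where p: "p < k" "we ! p" by blast
      define i where "i = m + (2*n + 1)"
      have im: "\<not> i < m" "i - m = 2*n+1" unfolding i_def by simp_all
      have "u (i*k+p) = c (2*n+1) ! p" using upos[OF p(1), of i] ib[of i] im by simp
      then have "u (i*k+p)" using p unfolding c_def by simp
      moreover have "n \<le> i*k+p"
      proof -
        have "n \<le> i" unfolding i_def by simp
        moreover have "i \<le> i*k" using k by simp
        ultimately show ?thesis by linarith
      qed
      ultimately show ?thesis by blast
    next
      case False
      have "b n \<noteq> we" using b we by metis
      have "\<exists>p<k. b n ! p"
      proof (rule ccontr)
        assume nb: "\<not> (\<exists>p<k. b n ! p)"
        have "b n = we"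
        proof (rule nth_equalityI)
          show "length (b n) = length we" using b we by simp
          fix j assume "j < length (b n)"
          then show "b n ! j = we ! j" using nb False b we by auto
        qed
        then show False using \<open>b n \<noteq> we\<close> by simp
      qed
      then obtain p where p: "p < k" "b n ! p" by blast
      define i where "i = m + 2*n"
      have im: "\<not> i < m" "i - m = 2*n" unfolding i_def by simp_all
      have "u (i*k+p) = c (2*n) ! p" using upos[OF p(1), of i] ib[of i] im by simp
      then have "u (i*k+p)" using p unfolding c_def by simp
      moreover have "n \<le> i*k+p"
      proof -
        have "n \<le> i" unfolding i_def by simp
        moreover have "i \<le> i*k" using k by simp
        ultimately show ?thesis by linarith
      qed
      ultimately show ?thesis by blast
    qed
  qed
  have notper: "u \<noteq> (\<lambda>i. we ! (i mod k))"
  proof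
    assume eq: "u = (\<lambda>i. we ! (i mod k))"
    have "iblock k u m = b 0" using ib[of m] unfolding c_def by simp
    moreover have "iblock k u m = we"
    proof (rule nth_equalityI)
      show "length (iblock k u m) = length we" using we unfolding iblock_def by simp
      fix j assume "j < length (iblock k u m)"
      then have "j < k" unfolding iblock_def by simp
      then show "iblock k u m ! j = we ! j" using upos[of j m] eq by simp
    qed
    ultimately show False using b we by metis
  qed
  have pr: "pref r u"
    unfolding pref_def by (rule nth_equalityI) (auto simp: u_def)
  obtain j where "u j" using ones by blast
  then have pos: "0 < ival u" by (rule ival_pos)
  have "f_sigma \<sigma> k (ival u) = ival t"
    unfolding f_sigma_def tilde_ival[OF ones] using pos ival_le1[of u] notper sv we_def by simp
  then show ?thesis using pr by blast
qed


lemma bval_cons: "bval (b # w) = (if b then 1 else 0)/2 + bval w / 2"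
proof -
  have "bval (b # w) = (\<Sum>i<Suc (length w). (if (b#w)!i then 1 else 0)/2^(i+1))"
    unfolding bval_def by simp
  also have "\<dots> = (if b then 1 else 0)/2 + (\<Sum>i<length w. (if w!i then 1 else 0)/2^(i+2))"
    by (subst sum.lessThan_Suc_shift) simp
  also have "(\<Sum>i<length w. (if w!i then 1 else 0)/2^(i+2)) = bval w / (2::real)"
    unfolding bval_def sum_divide_distrib by (intro sum.cong) auto
  finally show ?thesis .
qed

lemma approx: "0 \<le> x \<Longrightarrow> x \<le> 1 \<Longrightarrow> \<exists>w. length w = L \<and> bval w \<le> x \<and> x \<le> bval w + 1/2^L"
proof (induction L arbitrary: x)
  case 0
  then show ?case by (intro exI[of _ "[]"]) (simp add: bval_def)
next
  case (Suc L)
  show ?case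
  proof (cases "x \<ge> 1/2")
    case True
    obtain w where w: "length w = L" "bval w \<le> 2*x - 1" "2*x - 1 \<le> bval w + 1/2^L"
      using Suc.IH[of "2*x-1"] Suc.prems True by auto
    show ?thesis using w by (intro exI[of _ "True # w"]) (auto simp: bval_cons)
  next
    case False
    obtain w where w: "length w = L" "bval w \<le> 2*x" "2*x \<le> bval w + 1/2^L"
      using Suc.IH[of "2*x"] Suc.prems False by auto
    show ?thesis using w by (intro exI[of _ "False # w"]) (auto simp: bval_cons)
  qed
qed

lemma rounding: "k \<ge> 1 \<Longrightarrow> k_rounding k w r \<Longrightarrow> (\<exists>v. r = w @ v) \<and> k dvd length r"
  unfolding k_rounding_def
proof (elim conjE, intro conjI)
  assume k: "k \<ge> 1" and l: "length r = (LEAST m. k dvd m \<and> length w \<le> m)"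
  have "\<exists>m. k dvd m \<and> length w \<le> m" using k by (intro exI[of _ "k * length w"]) auto
  from LeastI_ex[OF this] show "k dvd length r" using l by simp
qed

theorem lemma4p4:
  fixes \<sigma> :: "bool list \<Rightarrow> bool list" and k :: nat
  assumes "k \<ge> 2"
    and "erasing_subst \<sigma> k"
    and "strongly_erasing \<sigma> k"
    and "w_eps \<sigma> k \<noteq> replicate k True"
    and "optimal_subst \<sigma> k"
  shows "\<forall>x \<in> {0..1}. \<forall>\<delta> > 0. \<exists>z \<in> {0..1}. \<bar>x - z\<bar> < \<delta> \<and>
           (\<exists>n. \<bar>(f_sigma \<sigma> k ^^ n) x - (f_sigma \<sigma> k ^^ n) z\<bar> \<ge> 1/2)"
proof (intro ballI allI impI)
  fix x :: real and \<delta> :: real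
  assume x: "x \<in> {0..1}" and dl: "0 < \<delta>"
  have k: "k \<ge> 1" using assms(1) by simp
  let ?f = "f_sigma \<sigma> k"
  obtain L where L: "(1/2::real)^L < \<delta>" using real_arch_pow_inv[OF dl, of "1/2"] by auto
  obtain w0 where w0: "length w0 = L" "bval w0 \<le> x" "x \<le> bval w0 + 1/2^L"
    using approx[of x L] x by auto
  obtain n :: nat and r :: "nat \<Rightarrow> bool list" where n: "n \<ge> 1" and r0: "k_rounding k w0 (r 0)"
    and rj: "\<forall>j. 1 \<le> j \<and> j \<le> n - 1 \<longrightarrow> k_rounding k (subst_fin \<sigma> k (r (j - 1))) (r j)"
    and rn: "subst_fin \<sigma> k (r (n - 1)) = []"
    using spec[OF assms(3)[unfolded strongly_erasing_def], of w0] by blast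
  define a where "a = (?f ^^ n) x"
  define t where "t = (if a \<le> 1/2 then (\<lambda>_::nat. True) else (\<lambda>_. False))"
  have dv: "k dvd length (r j)" if "j \<le> n - 1" for j
  proof (cases "j = 0")
    case True
    then show ?thesis using rounding[OF k r0] by simp
  next
    case False
    then have "k_rounding k (subst_fin \<sigma> k (r (j - 1))) (r j)" using rj that by auto
    then show ?thesis using rounding[OF k] by blast
  qed
  have chain: "d \<le> n - 1 \<Longrightarrow> \<exists>u. pref (r (n - 1 - d)) u \<and> (?f ^^ Suc d) (ival u) = ival t" for d
  proof (induction d)
    case 0
    have "pref (subst_fin \<sigma> k (r (n - 1))) t" using rn pref_empty by simp
    from step[OF k assms(2) assms(5) dv[of "n - 1"] this] show ?case by simp
  next
    case (Suc d)
    define j where "j = n - 1 - Suc d"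
    have j1: "n - 1 - d = Suc j" using Suc.prems unfolding j_def by simp
    obtain u' where u': "pref (r (Suc j)) u'" "(?f ^^ Suc d) (ival u') = ival t"
      using Suc.IH Suc.prems j1 by auto
    have "k_rounding k (subst_fin \<sigma> k (r j)) (r (Suc j))"
    proof -
      have sj: "1 \<le> Suc j \<and> Suc j \<le> n - 1" using Suc.prems unfolding j_def by simp
      show ?thesis using rj[rule_format, OF sj] by simp
    qed
    then obtain v where "r (Suc j) = subst_fin \<sigma> k (r j) @ v" using rounding[OF k] by blast
    then have "pref (subst_fin \<sigma> k (r j)) u'" using u'(1) pref_append by metis
    moreover have jn: "j \<le> n - 1" unfolding j_def by simp
    ultimately obtain u where
      u: "pref (r j) u" "?f (ival u) = ival u'" using step[OF k assms(2) assms(5) dv[OF jn]] by blast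
    have "(?f ^^ Suc (Suc d)) (ival u) = (?f ^^ Suc d) (?f (ival u))"
      by (simp only: funpow_Suc_right comp_def)
    then show ?case using u u' unfolding j_def by auto
  qed
  obtain u where u: "pref (r 0) u" "(?f ^^ n) (ival u) = ival t"
    using chain[of "n - 1"] n by auto
  obtain v where "r 0 = w0 @ v" using rounding[OF k r0] by blast
  then have pw: "pref w0 u" using u(1) pref_append by metis
  have zb: "bval w0 \<le> ival u" "ival u \<le> bval w0 + 1/2^L" using pref_ival[OF pw] w0(1) by auto
  show "\<exists>z\<in>{0..1}. \<bar>x - z\<bar> < \<delta> \<and> (\<exists>n. 1/2 \<le> \<bar>(?f ^^ n) x - (?f ^^ n) z\<bar>)"
  proof (intro bexI conjI exI)
    show "ival u \<in> {0..1}" using ival_nonneg ival_le1 by auto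
    show "\<bar>x - ival u\<bar> < \<delta>" using zb w0 L by (simp add: power_one_over abs_if)
    show "1/2 \<le> \<bar>(?f ^^ n) x - (?f ^^ n) (ival u)\<bar>"
      using u(2) ival_ones ival_zeros unfolding a_def[symmetric] t_def by (auto split: if_splits)
  qed
qed

end
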